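(* There is a polynomial $p$ such that for all $\varepsilon,\eta\in(0,1]$, every finite nonempty set system $\mathcal{F}$ on a finite ground set $V$ has an $(\varepsilon,\eta)$-clustering with at most $2^{p(1/\varepsilon,1/\eta)}$ clusters.
   Context: Let $\mathcal{F}$ be a finite family of subsets of a finite set $V$. For $x\in V$, $\mathcal{F}_x$ is the set of members of $\mathcal{F}$ containing $x$, and $\mathcal{F}_{xy}=\mathcal{F}_x\cap\mathcal{F}_y$. For $\varepsilon\geq0$, $D_\varepsilon(x)=\{y\in V:|\mathcal{F}_{xy}|\leq\varepsilon|\mathcal{F}|\}$ and $D(x)=D_0(x)$. An $(\varepsilon,\eta)$-cluster is a set $X\subseteq V$ with $|D(x)\setminus D_\varepsilon(y)|\leq\eta|V|$ for all $x,y\in X$; an $(\varepsilon,\eta)$-clustering is a partition of $V$ into $(\varepsilon,\eta)$-clusters, and its size is the number of parts. *)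

theory Defs
  imports Complex_Main "HOL-Library.Disjoint_Sets"
begin

definition fam_x :: "'a set set \<Rightarrow> 'a \<Rightarrow> 'a set set" where
  "fam_x F x = {A \<in> F. x \<in> A}"

definition fam_xy :: "'a set set \<Rightarrow> 'a \<Rightarrow> 'a \<Rightarrow> 'a set set" where
  "fam_xy F x y = fam_x F x \<inter> fam_x F y"

definition Deps :: "'a set \<Rightarrow> 'a set set \<Rightarrow> real \<Rightarrow> 'a \<Rightarrow> 'a set" where
  "Deps V F \<epsilon> x = {y \<in> V. real (card (fam_xy F x y)) \<le> \<epsilon> * real (card F)}"

definition is_cluster :: "'a set \<Rightarrow> 'a set set \<Rightarrow> real \<Rightarrow> real \<Rightarrow> 'a set \<Rightarrow> bool" where
  "is_cluster V F \<epsilon> \<eta> X \<longleftrightarrow> X \<subseteq> V \<and>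
     (\<forall>x\<in>X. \<forall>y\<in>X. real (card (Deps V F 0 x - Deps V F \<epsilon> y)) \<le> \<eta> * real (card V))"

definition is_clustering :: "'a set \<Rightarrow> 'a set set \<Rightarrow> real \<Rightarrow> real \<Rightarrow> 'a set set \<Rightarrow> bool" where
  "is_clustering V F \<epsilon> \<eta> P \<longleftrightarrow> partition_on V P \<and> (\<forall>X\<in>P. is_cluster V F \<epsilon> \<eta> X)"

definition poly2 :: "(nat \<Rightarrow> nat \<Rightarrow> real) \<Rightarrow> nat \<Rightarrow> real \<Rightarrow> real \<Rightarrow> real" where
  "poly2 c d a b = (\<Sum>i\<le>d. \<Sum>j\<le>d. c i j * a ^ i * b ^ j)"

end

theory Submission imports Defs begin

definition ip :: "nat set set \<Rightarrow> (nat set \<Rightarrow> real) \<Rightarrow> (nat set \<Rightarrow> real) \<Rightarrow> real" where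
  "ip F u w = (\<Sum>A\<in>F. u A * w A) / real (card F)"

lemma ip_comm: "ip F u w = ip F w u"
  unfolding ip_def by (simp add: mult.commute)

lemma ip_nonneg: "ip F w w \<ge> 0"
  unfolding ip_def by (intro divide_nonneg_nonneg sum_nonneg) auto

lemma ip_zero:
  assumes "finite F" "ip F w w = 0" shows "ip F w z = 0"
proof (cases "card F = 0")
  case True thus ?thesis by (simp add: ip_def)
next
  case False
  hence "(\<Sum>A\<in>F. w A * w A) = 0" using assms(2) by (simp add: ip_def)
  hence "\<forall>A\<in>F. w A * w A = 0" using assms(1) by (subst (asm) sum_nonneg_eq_0_iff) auto
  thus ?thesis by (simp add: ip_def)
qed

lemma ip_diff: "ip F (\<lambda>A. u A - w A) z = ip F u z - ip F w z"
  unfolding ip_def by (simp add: left_diff_distrib sum_subtractf diff_divide_distrib)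

lemma ip_smult: "ip F (\<lambda>A. c * u A) z = c * ip F u z"
  unfolding ip_def by (simp add: sum_distrib_left mult.assoc)

lemma ip_sum: "ip F (\<lambda>A. \<Sum>i\<in>I. g i * u i A) z = (\<Sum>i\<in>I. g i * ip F (u i) z)"
proof -
  have "(\<Sum>A\<in>F. (\<Sum>i\<in>I. g i * u i A) * z A) = (\<Sum>i\<in>I. g i * (\<Sum>A\<in>F. u i A * z A))"
    by (simp add: sum_distrib_right sum_distrib_left mult.assoc sum.swap[of _ F])
  thus ?thesis unfolding ip_def by (simp add: sum_divide_distrib[symmetric])
qed

definition ON :: "nat set set \<Rightarrow> nat \<Rightarrow> (nat \<Rightarrow> nat set \<Rightarrow> real) \<Rightarrow> bool" where
  "ON F k u \<longleftrightarrow> (\<forall>i<k. \<forall>j<k. ip F (u i) (u j) = (if i = j then 1 else 0))"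

definition res :: "nat set set \<Rightarrow> nat \<Rightarrow> (nat \<Rightarrow> nat set \<Rightarrow> real) \<Rightarrow> (nat set \<Rightarrow> real) \<Rightarrow> nat set \<Rightarrow> real" where
  "res F k u w = (\<lambda>A. w A - (\<Sum>i<k. ip F w (u i) * u i A))"

lemma res_orth:
  assumes "ON F k u" "j < k" shows "ip F (res F k u w) (u j) = 0"
proof -
  have "ip F (res F k u w) (u j) = ip F w (u j) - (\<Sum>i<k. ip F w (u i) * ip F (u i) (u j))"
    unfolding res_def by (simp add: ip_diff ip_sum)
  also have "(\<Sum>i<k. ip F w (u i) * ip F (u i) (u j)) = (\<Sum>i<k. if i = j then ip F w (u j) else 0)"
    using assms by (intro sum.cong) (auto simp: ON_def)
  also have "\<dots> = ip F w (u j)" using assms(2) by simp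
  finally show ?thesis by simp
qed

lemma res_decomp: "ip F w z = ip F (res F k u w) z + (\<Sum>i<k. ip F w (u i) * ip F (u i) z)"
  unfolding res_def by (simp add: ip_diff ip_sum)

lemma res_norm:
  assumes "ON F k u" shows "ip F (res F k u w) (res F k u w) = ip F w w - (\<Sum>i<k. (ip F w (u i))\<^sup>2)"
proof -
  have "ip F (res F k u w) (res F k u w) = ip F w (res F k u w) - (\<Sum>i<k. ip F w (u i) * ip F (u i) (res F k u w))"
    by (subst (1) res_def) (simp add: ip_diff ip_sum)
  also have "(\<Sum>i<k. ip F w (u i) * ip F (u i) (res F k u w)) = 0"
    using res_orth[OF assms] by (simp add: ip_comm)
  also have "ip F w (res F k u w) = ip F w w - (\<Sum>i<k. (ip F w (u i))\<^sup>2)"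
    by (subst ip_comm, subst (1) res_def) (simp add: ip_diff ip_sum power2_eq_square ip_comm)
  finally show ?thesis by simp
qed

lemma bessel:
  assumes "ON F k u" shows "(\<Sum>i<k. (ip F w (u i))\<^sup>2) \<le> ip F w w"
  using res_norm[OF assms, of w] ip_nonneg[of F "res F k u w"] by simp

lemma bessel1:
  assumes "ON F k u" "i < k" shows "\<bar>ip F w (u i)\<bar> \<le> sqrt (ip F w w)"
proof -
  have "(ip F w (u i))\<^sup>2 \<le> (\<Sum>i<k. (ip F w (u i))\<^sup>2)"
    using assms(2) by (intro member_le_sum) auto
  also have "\<dots> \<le> ip F w w" by (rule bessel[OF assms(1)])
  finally show ?thesis by (simp add: real_le_rsqrt)
qed

lemma ON_extend:
  assumes "ON F k u" "ip F r r > 0" "\<And>j. j < k \<Longrightarrow> ip F r (u j) = 0"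
  shows "ON F (Suc k) (u(k := (\<lambda>A. (1 / sqrt (ip F r r)) * r A)))"
proof -
  let ?s = "sqrt (ip F r r)"
  have s2: "?s * ?s = ip F r r" using assms(2) by simp
  have kk: "ip F (\<lambda>A. (1 / ?s) * r A) (\<lambda>A. (1 / ?s) * r A) = 1"
  proof -
    have "ip F (\<lambda>A. (1 / ?s) * r A) (\<lambda>A. (1 / ?s) * r A) = (1 / ?s) * ip F r (\<lambda>A. (1 / ?s) * r A)"
      by (rule ip_smult)
    also have "ip F r (\<lambda>A. (1 / ?s) * r A) = ip F (\<lambda>A. (1 / ?s) * r A) r" by (rule ip_comm)
    also have "\<dots> = (1 / ?s) * ip F r r" by (rule ip_smult)
    finally show ?thesis using assms(2) s2 by (simp add: field_simps)
  qed
  have kj: "ip F (\<lambda>A. (1 / ?s) * r A) (u j) = 0" if "j < k" for j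
    by (simp only: ip_smult assms(3)[OF that] mult_zero_right)
  let ?w = "\<lambda>A. (1 / ?s) * r A"
  show ?thesis unfolding ON_def
  proof (intro allI impI)
    fix i j assume i: "i < Suc k" and j: "j < Suc k"
    show "ip F ((u(k := ?w)) i) ((u(k := ?w)) j) = (if i = j then 1 else 0)"
    proof (cases "i = k")
      case True
      show ?thesis
      proof (cases "j = k")
        case True thus ?thesis using \<open>i = k\<close> kk by simp
      next
        case False thus ?thesis using \<open>i = k\<close> kj[of j] j by simp
      qed
    next
      case False
      hence ik: "i < k" using i by simp
      show ?thesis
      proof (cases "j = k")
        case True thus ?thesis using False kj[OF ik] ip_comm[of F "u i" ?w] by simp
      next
        case False thus ?thesis using \<open>i \<noteq> k\<close> ik j assms(1) unfolding ON_def by simp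
      qed
    qed
  qed
qed


definition ind :: "nat \<Rightarrow> nat set \<Rightarrow> real" where
  "ind v = (\<lambda>A. if v \<in> A then 1 else 0)"

lemma ip_ind:
  assumes "finite F" shows "ip F (ind x) (ind z) = real (card (fam_xy F x z)) / real (card F)"
proof -
  have "(\<Sum>A\<in>F. ind x A * ind z A) = (\<Sum>A\<in>F. if x \<in> A \<and> z \<in> A then 1 else 0)"
    by (intro sum.cong) (auto simp: ind_def)
  also have "\<dots> = (\<Sum>A\<in>{A\<in>F. x \<in> A \<and> z \<in> A}. 1)"
    using assms by (simp add: sum.inter_filter[symmetric])
  also have "{A\<in>F. x \<in> A \<and> z \<in> A} = fam_xy F x z"
    by (auto simp: fam_xy_def fam_x_def)
  finally show ?thesis by (simp add: ip_def)
qed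

lemma ip_ind_le1:
  assumes "finite F" shows "ip F (ind z) (ind z) \<le> 1"
proof (cases "card F = 0")
  case True thus ?thesis by (simp add: ip_def)
next
  case False
  have "card (fam_xy F z z) \<le> card F" using assms by (intro card_mono) (auto simp: fam_xy_def fam_x_def)
  thus ?thesis using False by (simp add: ip_ind[OF assms])
qed

lemma div_ge_self: "0 < t \<Longrightarrow> t \<le> 1 \<Longrightarrow> 0 \<le> a \<Longrightarrow> a \<le> a / (t::real)"
  by (simp add: le_divide_eq mult_left_le)

lemma exists_basis:
  assumes F: "finite F" and V: "finite V" and d: "0 < \<delta>"
  shows "\<exists>k u. ON F k u \<and> real k * \<delta> \<le> 1 \<and>
     (\<forall>v\<in>V. (\<Sum>z\<in>V. (ip F (res F k u (ind v)) (ind z))\<^sup>2) \<le> \<delta> * real (card V))"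
proof -
  define S where "S = {k. \<exists>u. ON F k u \<and> (\<forall>i<k. \<delta> * real (card V) < (\<Sum>z\<in>V. (ip F (ind z) (u i))\<^sup>2))}"
  have bound: "real k * \<delta> \<le> 1" if kin: "k \<in> S" for k
  proof -
    obtain u where u: "ON F k u" "\<And>i. i<k \<Longrightarrow> \<delta> * real (card V) < (\<Sum>z\<in>V. (ip F (ind z) (u i))\<^sup>2)"
      using kin unfolding S_def by blast
    have "real k * (\<delta> * real (card V)) = (\<Sum>i<k. \<delta> * real (card V))" by simp
    also have "\<dots> \<le> (\<Sum>i<k. (\<Sum>z\<in>V. (ip F (ind z) (u i))\<^sup>2))"
      using u(2) by (intro sum_mono) (simp add: less_imp_le)
    also have "\<dots> = (\<Sum>z\<in>V. (\<Sum>i<k. (ip F (ind z) (u i))\<^sup>2))" by (rule sum.swap)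
    also have "\<dots> \<le> (\<Sum>z\<in>V. 1)"
      by (intro sum_mono order.trans[OF bessel[OF u(1)] ip_ind_le1[OF F]])
    finally have *: "real k * (\<delta> * real (card V)) \<le> real (card V)" by simp
    show ?thesis
    proof (cases "card V = 0")
      case True
      have "k = 0"
      proof (rule ccontr)
        assume "k \<noteq> 0" then have "\<delta> * real (card V) < (\<Sum>z\<in>V. (ip F (ind z) (u 0))\<^sup>2)" using u(2) by simp
        thus False using True V by simp
      qed
      thus ?thesis by simp
    next
      case False
      hence "real k * \<delta> * real (card V) \<le> 1 * real (card V)" using * by (simp add: mult.assoc)
      thus ?thesis using False by (simp add: mult_le_cancel_right)
    qed
  qed
  have finS: "finite S"
  proof (rule finite_subset)
    show "S \<subseteq> {..nat \<lceil>1 / \<delta>\<rceil>}"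
    proof
      fix k assume "k \<in> S"
      hence "real k * \<delta> \<le> 1" by (rule bound)
      hence "real k \<le> 1 / \<delta>" using d by (simp add: field_simps)
      hence "real k \<le> real (nat \<lceil>1 / \<delta>\<rceil>)" by linarith
      thus "k \<in> {..nat \<lceil>1 / \<delta>\<rceil>}" by simp
    qed
  qed simp
  have "0 \<in> S" by (auto simp: S_def ON_def)
  define k where "k = Max S"
  have kS: "k \<in> S" using finS \<open>0 \<in> S\<close> unfolding k_def by (intro Max_in) auto
  then obtain u where u: "ON F k u" "\<And>i. i<k \<Longrightarrow> \<delta> * real (card V) < (\<Sum>z\<in>V. (ip F (ind z) (u i))\<^sup>2)"
    unfolding S_def by blast
  have good: "\<forall>v\<in>V. (\<Sum>z\<in>V. (ip F (res F k u (ind v)) (ind z))\<^sup>2) \<le> \<delta> * real (card V)"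
  proof (rule ccontr)
    assume "\<not> ?thesis"
    then obtain v where v: "v \<in> V" and big: "\<delta> * real (card V) < (\<Sum>z\<in>V. (ip F (res F k u (ind v)) (ind z))\<^sup>2)"
      by (auto simp: not_le)
    define r where "r = res F k u (ind v)"
    have rpos: "ip F r r > 0"
    proof (rule ccontr)
      assume "\<not> ip F r r > 0"
      hence "ip F r r = 0" using ip_nonneg[of F r] by simp
      hence "\<And>z. ip F r (ind z) = 0" using ip_zero[OF F] by blast
      hence "(\<Sum>z\<in>V. (ip F (res F k u (ind v)) (ind z))\<^sup>2) = 0" by (simp add: r_def)
      moreover have "0 \<le> \<delta> * real (card V)" using d by simp
      ultimately show False using big by linarith
    qed
    have rle: "ip F r r \<le> 1"
      using res_norm[OF u(1), of "ind v"] ip_ind_le1[OF F, of v] sum_nonneg[of "{..<k}" "\<lambda>i. (ip F (ind v) (u i))\<^sup>2"]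
      by (simp add: r_def)
    define u' where "u' = u(k := (\<lambda>A. (1 / sqrt (ip F r r)) * r A))"
    have ON': "ON F (Suc k) u'" unfolding u'_def
      using ON_extend[OF u(1) rpos] res_orth[OF u(1)] by (simp add: r_def)
    have e1: "(ip F (ind z) (u' k))\<^sup>2 = (ip F r (ind z))\<^sup>2 / ip F r r" for z
    proof -
      have "ip F (ind z) (u' k) = ip F (u' k) (ind z)" by (rule ip_comm)
      also have "\<dots> = (1 / sqrt (ip F r r)) * ip F r (ind z)" by (simp only: u'_def fun_upd_same ip_smult)
      finally show ?thesis using rpos by (simp add: power_mult_distrib power_divide)
    qed
    have e2: "(ip F r (ind z))\<^sup>2 \<le> (ip F r (ind z))\<^sup>2 / ip F r r" for z
      using rpos rle by (intro div_ge_self) auto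
    have "(\<Sum>z\<in>V. (ip F r (ind z))\<^sup>2) \<le> (\<Sum>z\<in>V. (ip F (ind z) (u' k))\<^sup>2)"
      unfolding e1 by (intro sum_mono e2)
    hence newgood: "\<delta> * real (card V) < (\<Sum>z\<in>V. (ip F (ind z) (u' k))\<^sup>2)"
      using big unfolding r_def by linarith
    have "Suc k \<in> S" unfolding S_def
      using ON' newgood u(2) by (auto simp: less_Suc_eq u'_def)
    hence "Suc k \<le> k" using Max_ge[OF finS] unfolding k_def by blast
    thus False by simp
  qed
  show ?thesis using u(1) bound[OF kS] good by blast
qed


lemma markov_count:
  assumes "finite V" "0 \<le> \<theta>"
  shows "real (card {z\<in>V. \<theta> < \<bar>t z\<bar>}) * \<theta>\<^sup>2 \<le> (\<Sum>z\<in>V. (t z)\<^sup>2)"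
proof -
  have "real (card {z\<in>V. \<theta> < \<bar>t z\<bar>}) * \<theta>\<^sup>2 = (\<Sum>z\<in>{z\<in>V. \<theta> < \<bar>t z\<bar>}. \<theta>\<^sup>2)" by simp
  also have "\<dots> \<le> (\<Sum>z\<in>{z\<in>V. \<theta> < \<bar>t z\<bar>}. (t z)\<^sup>2)"
  proof (rule sum_mono)
    fix z assume "z \<in> {z\<in>V. \<theta> < \<bar>t z\<bar>}"
    hence "\<theta> < \<bar>t z\<bar>" by simp
    hence "\<theta>\<^sup>2 \<le> \<bar>t z\<bar>\<^sup>2" using assms(2) by (intro power_mono) auto
    thus "\<theta>\<^sup>2 \<le> (t z)\<^sup>2" by simp
  qed
  also have "\<dots> \<le> (\<Sum>z\<in>V. (t z)\<^sup>2)" using assms(1) by (intro sum_mono2) auto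
  finally show ?thesis .
qed

lemma floor_eq_close: "\<lfloor>x\<rfloor> = \<lfloor>y\<rfloor> \<Longrightarrow> \<bar>x - y\<bar> < (1::real)"
  by linarith


lemma poly2_eval: "poly2 (\<lambda>i j. if i = 5 \<and> j = 2 then 1998 else 0) 5 a b = 1998 * a ^ 5 * b ^ 2"
proof -
  have inner: "(\<Sum>j\<le>(5::nat). (if i = 5 \<and> j = 2 then 1998 else 0) * a ^ i * b ^ j)
     = (if i = (5::nat) then 1998 * a ^ 5 * b ^ 2 else 0)" for i
  proof (cases "i = 5")
    case True
    have "(\<Sum>j\<le>(5::nat). (if i = 5 \<and> j = 2 then 1998 else 0) * a ^ i * b ^ j)
       = (\<Sum>j\<in>{..(5::nat)}. if j = 2 then 1998 * a ^ 5 * b ^ 2 else 0)"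
      using True by (intro sum.cong) auto
    also have "\<dots> = 1998 * a ^ 5 * b ^ 2"
      by (subst sum.delta) auto
    finally show ?thesis using True by simp
  qed simp
  have "poly2 (\<lambda>i j. if i = 5 \<and> j = 2 then 1998 else 0) 5 a b
     = (\<Sum>i\<in>{..(5::nat)}. if i = 5 then 1998 * a ^ 5 * b ^ 2 else 0)"
    unfolding poly2_def inner ..
  also have "\<dots> = 1998 * a ^ 5 * b ^ 2" by (subst sum.delta) auto
  finally show ?thesis .
qed

lemma cluster_bound:
  fixes \<epsilon> \<eta> :: real and V :: "nat set" and F :: "nat set set"
  assumes eps: "0 < \<epsilon>" "\<epsilon> \<le> 1" and eta: "0 < \<eta>" "\<eta> \<le> 1"
    and V: "finite V" and FV: "F \<subseteq> Pow V" and Fne: "F \<noteq> {}"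
  shows "\<exists>P. is_clustering V F \<epsilon> \<eta> P \<and> real (card P) \<le> 2 powr (1998 * (1/\<epsilon>) ^ 5 * (1/\<eta>) ^ 2)"
proof -
  define a where "a = 1 / \<epsilon>"
  define b where "b = 1 / \<eta>"
  have a1: "a \<ge> 1" using eps by (simp add: a_def)
  have b1: "b \<ge> 1" using eta by (simp add: b_def)
  have F: "finite F" using finite_subset[OF FV] V by simp
  have Npos: "card F > 0" using F Fne by (simp add: card_gt_0_iff)
  define \<delta> where "\<delta> = \<epsilon>\<^sup>2 * \<eta> / 18"
  have dpos: "0 < \<delta>" using eps eta by (simp add: \<delta>_def)
  obtain k u where u: "ON F k u" and kd: "real k * \<delta> \<le> 1"
    and good': "\<forall>v\<in>V. (\<Sum>z\<in>V. (ip F (res F k u (ind v)) (ind z))\<^sup>2) \<le> \<delta> * real (card V)"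
    using exists_basis[OF F V dpos] by (elim exE conjE)
  have good: "(\<Sum>z\<in>V. (ip F (res F k u (ind v)) (ind z))\<^sup>2) \<le> \<delta> * real (card V)" if "v \<in> V" for v
    using good' that by blast
  have kL: "real k \<le> 18 * a\<^sup>2 * b"
  proof -
    have "real k \<le> 1 / \<delta>" using kd dpos by (simp add: le_divide_eq)
    also have "1 / \<delta> = 18 * a\<^sup>2 * b" using eps eta by (simp add: \<delta>_def a_def b_def power2_eq_square)
    finally show ?thesis .
  qed
  define m :: nat where "m = nat \<lceil>54 * a ^ 3 * b\<rceil>"
  have a3: "1 \<le> a ^ 3" by (rule one_le_power[OF a1])
  have "1 * 1 \<le> a ^ 3 * b" by (rule mult_mono[OF a3 b1]) (use a3 a1 in auto)
  hence a3b: "a ^ 3 * b \<ge> 1" by simp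
  have mge: "real m \<ge> 54 * a ^ 3 * b" unfolding m_def by linarith
  have mle: "real m \<le> 54 * a ^ 3 * b + 1" unfolding m_def using a3b by linarith
  have mpos: "real m > 0" using mge a3b by linarith
  have km: "real k / real m \<le> \<epsilon> / 3"
  proof -
    have "real k * (3 * a) \<le> 18 * a\<^sup>2 * b * (3 * a)" using kL a1 by (intro mult_right_mono) auto
    also have "\<dots> = 54 * a ^ 3 * b" by (simp add: power2_eq_square power3_eq_cube)
    also have "\<dots> \<le> real m" by (rule mge)
    finally have "real k * (3 * a) \<le> real m" .
    hence "real k / real m \<le> 1 / (3 * a)" using mpos a1 by (simp add: field_simps)
    thus ?thesis using eps by (simp add: a_def)
  qed
  define c where "c v i = ip F (ind v) (u i)" for v i
  have cb: "\<bar>c v i\<bar> \<le> 1" if "i < k" for v i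
  proof -
    have "sqrt (ip F (ind v) (ind v)) \<le> 1" using ip_ind_le1[OF F, of v] by simp
    thus ?thesis using bessel1[OF u that, of "ind v"] unfolding c_def by linarith
  qed
  have bb: "\<bar>ip F (u i) (ind z)\<bar> \<le> 1" if "i < k" for z i
  proof -
    have "sqrt (ip F (ind z) (ind z)) \<le> 1" using ip_ind_le1[OF F, of z] by simp
    thus ?thesis using bessel1[OF u that, of "ind z"] ip_comm[of F "u i" "ind z"] by linarith
  qed
  define key where "key v = map (\<lambda>i. \<lfloor>real m * c v i\<rfloor>) [0..<k]" for v
  define P where "P = (\<lambda>\<kappa>. {v\<in>V. key v = \<kappa>}) ` (key ` V)"
  define A where "A v = {z\<in>V. \<epsilon> / 3 < \<bar>ip F (res F k u (ind v)) (ind z)\<bar>}" for v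
  have cardA: "real (card (A v)) \<le> \<eta> * real (card V) / 2" if "v \<in> V" for v
  proof -
    have "real (card (A v)) * (\<epsilon> / 3)\<^sup>2 \<le> \<delta> * real (card V)"
      unfolding A_def using markov_count[OF V, of "\<epsilon>/3" "\<lambda>z. ip F (res F k u (ind v)) (ind z)"] good[OF that] eps
      by simp
    also have "\<dots> = (\<eta> * real (card V) / 2) * (\<epsilon> / 3)\<^sup>2" by (simp add: \<delta>_def power2_eq_square)
    finally show ?thesis using eps by (simp add: mult_le_cancel_right)
  qed
  have close: "\<bar>c x i - c y i\<bar> < 1 / real m" if "key x = key y" "i < k" for x y i
  proof -
    have "\<lfloor>real m * c x i\<rfloor> = \<lfloor>real m * c y i\<rfloor>"
      using that arg_cong[OF that(1), of "\<lambda>l. l ! i"] by (simp add: key_def)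
    hence "\<bar>real m * c x i - real m * c y i\<bar> < 1" by (rule floor_eq_close)
    hence "real m * \<bar>c x i - c y i\<bar> < 1" using mpos by (simp add: right_diff_distrib[symmetric] abs_mult)
    thus ?thesis using mpos by (simp add: field_simps)
  qed
  have clus: "real (card (Deps V F 0 x - Deps V F \<epsilon> y)) \<le> \<eta> * real (card V)"
    if xy: "x \<in> V" "y \<in> V" "key x = key y" for x y
  proof -
    have sub: "Deps V F 0 x - Deps V F \<epsilon> y \<subseteq> A x \<union> A y"
    proof
      fix z assume z: "z \<in> Deps V F 0 x - Deps V F \<epsilon> y"
      hence zV: "z \<in> V" and cx: "card (fam_xy F x z) = 0" and cy: "\<not> real (card (fam_xy F y z)) \<le> \<epsilon> * real (card F)"
        by (auto simp: Deps_def)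
      have ix: "ip F (ind x) (ind z) = 0" using cx by (simp add: ip_ind[OF F])
      have iy: "ip F (ind y) (ind z) > \<epsilon>" using cy Npos by (simp add: ip_ind[OF F] field_simps)
      define S where "S w = (\<Sum>i<k. ip F (ind w) (u i) * ip F (u i) (ind z))" for w
      have dS: "\<bar>S y - S x\<bar> \<le> \<epsilon> / 3"
      proof -
        have "S y - S x = (\<Sum>i<k. (c y i - c x i) * ip F (u i) (ind z))"
          by (simp add: S_def c_def sum_subtractf left_diff_distrib)
        also have "\<bar>\<dots>\<bar> \<le> (\<Sum>i<k. \<bar>(c y i - c x i) * ip F (u i) (ind z)\<bar>)" by (rule sum_abs)
        also have "\<dots> \<le> (\<Sum>i<k. 1 / real m)"
        proof (rule sum_mono)
          fix i assume "i \<in> {..<k}"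
          hence ik: "i < k" by simp
          have "\<bar>(c y i - c x i) * ip F (u i) (ind z)\<bar> = \<bar>c y i - c x i\<bar> * \<bar>ip F (u i) (ind z)\<bar>"
            by (simp add: abs_mult)
          also have "\<dots> \<le> (1 / real m) * 1"
            using close[OF xy(3)[symmetric] ik] bb[OF ik] by (intro mult_mono) auto
          finally show "\<bar>(c y i - c x i) * ip F (u i) (ind z)\<bar> \<le> 1 / real m" by simp
        qed
        also have "\<dots> = real k / real m" by simp
        finally show ?thesis using km by linarith
      qed
      have "ip F (ind y) (ind z) = ip F (res F k u (ind y)) (ind z) + S y" unfolding S_def by (rule res_decomp)
      moreover have "ip F (ind x) (ind z) = ip F (res F k u (ind x)) (ind z) + S x" unfolding S_def by (rule res_decomp)
      ultimately have "\<epsilon> / 3 < \<bar>ip F (res F k u (ind x)) (ind z)\<bar> \<or> \<epsilon> / 3 < \<bar>ip F (res F k u (ind y)) (ind z)\<bar>"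
        using ix iy dS by linarith
      thus "z \<in> A x \<union> A y" using zV by (auto simp: A_def)
    qed
    have "card (Deps V F 0 x - Deps V F \<epsilon> y) \<le> card (A x \<union> A y)"
      using V by (intro card_mono[OF _ sub]) (auto simp: A_def)
    also have "\<dots> \<le> card (A x) + card (A y)" by (rule card_Un_le)
    finally have "real (card (Deps V F 0 x - Deps V F \<epsilon> y)) \<le> real (card (A x)) + real (card (A y))" by linarith
    also have "\<dots> \<le> \<eta> * real (card V)" using cardA[OF xy(1)] cardA[OF xy(2)] by linarith
    finally show ?thesis .
  qed
  have part: "partition_on V P"
  proof (rule partition_onI)
    show "\<Union>P = V" unfolding P_def by auto
    show "disjnt p q" if "p \<in> P" "q \<in> P" "p \<noteq> q" for p q
      using that unfolding P_def disjnt_def by auto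
    show "{} \<notin> P" unfolding P_def by auto
  qed
  have isc: "is_clustering V F \<epsilon> \<eta> P"
    unfolding is_clustering_def
  proof (intro conjI part ballI)
    fix X assume "X \<in> P"
    then obtain w where X: "X = {v\<in>V. key v = key w}" unfolding P_def by blast
    show "is_cluster V F \<epsilon> \<eta> X" unfolding is_cluster_def
      using clus X by auto
  qed
  have range: "key ` V \<subseteq> {xs. set xs \<subseteq> {- int m..int m} \<and> length xs = k}"
  proof
    fix l assume "l \<in> key ` V"
    then obtain v where l: "l = key v" by blast
    have "\<lfloor>real m * c v i\<rfloor> \<in> {- int m..int m}" if "i < k" for i
    proof -
      have "\<bar>real m * c v i\<bar> \<le> real m" using cb[OF that] mpos by (simp add: abs_mult mult_left_le)
      hence "- real m \<le> real m * c v i" "real m * c v i \<le> real m" by linarith+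
      hence "- int m \<le> \<lfloor>real m * c v i\<rfloor>" "\<lfloor>real m * c v i\<rfloor> \<le> int m"
        by (simp_all add: le_floor_iff floor_le_iff)
      thus ?thesis by simp
    qed
    thus "l \<in> {xs. set xs \<subseteq> {- int m..int m} \<and> length xs = k}" by (auto simp: l key_def)
  qed
  have "card P \<le> card (key ` V)" unfolding P_def by (rule card_image_le) (use V in simp)
  also have "\<dots> \<le> card {xs. set xs \<subseteq> {- int m..int m} \<and> length xs = k}"
    by (intro card_mono range finite_lists_length_eq) simp
  also have "\<dots> = (2 * m + 1) ^ k" by (simp add: card_lists_length_eq nat_add_distrib nat_mult_distrib)
  also have "\<dots> \<le> (2 ^ (2 * m + 1)) ^ k" by (intro power_mono less_imp_le[OF less_exp]) simp
  also have "\<dots> = 2 ^ ((2 * m + 1) * k)" by (rule power_mult[symmetric])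
  finally have c1: "real (card P) \<le> 2 ^ ((2 * m + 1) * k)" by (metis of_nat_le_iff of_nat_numeral of_nat_power)
  have "real ((2 * m + 1) * k) = (2 * real m + 1) * real k" by (simp add: algebra_simps)
  also have "\<dots> \<le> (111 * a ^ 3 * b) * (18 * a\<^sup>2 * b)"
  proof (rule mult_mono)
    show "2 * real m + 1 \<le> 111 * a ^ 3 * b" using mle a3b by linarith
  qed (use kL a3b in \<open>auto simp: mult.commute\<close>)
  also have "\<dots> = 1998 * a ^ 5 * b ^ 2" by (simp add: power2_eq_square power3_eq_cube numeral_eq_Suc)
  finally have c2: "real ((2 * m + 1) * k) \<le> 1998 * a ^ 5 * b ^ 2" .
  have e2: "(2::real) ^ ((2 * m + 1) * k) = 2 powr real ((2 * m + 1) * k)" by (rule powr_realpow[symmetric]) simp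
  have "real (card P) \<le> 2 powr real ((2 * m + 1) * k)" using c1 unfolding e2 .
  also have "\<dots> \<le> 2 powr (1998 * a ^ 5 * b ^ 2)" using c2 by (intro powr_mono) auto
  finally show ?thesis using isc unfolding a_def b_def by blast
qed

theorem lemma5p5:
  "\<exists>(c :: nat \<Rightarrow> nat \<Rightarrow> real) (d :: nat).
     \<forall>(\<epsilon>::real) (\<eta>::real) (V :: nat set) (F :: nat set set).
       0 < \<epsilon> \<and> \<epsilon> \<le> 1 \<and> 0 < \<eta> \<and> \<eta> \<le> 1 \<and>
       finite V \<and> F \<subseteq> Pow V \<and> F \<noteq> {} \<longrightarrow>
       (\<exists>P. is_clustering V F \<epsilon> \<eta> P \<and>
            real (card P) \<le> 2 powr (poly2 c d (1/\<epsilon>) (1/\<eta>)))"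
proof -
  let ?c = "(\<lambda>i j. if i = 5 \<and> j = 2 then 1998 else 0) :: nat \<Rightarrow> nat \<Rightarrow> real"
  have H: "\<forall>(\<epsilon>::real) (\<eta>::real) (V :: nat set) (F :: nat set set).
       0 < \<epsilon> \<and> \<epsilon> \<le> 1 \<and> 0 < \<eta> \<and> \<eta> \<le> 1 \<and>
       finite V \<and> F \<subseteq> Pow V \<and> F \<noteq> {} \<longrightarrow>
       (\<exists>P. is_clustering V F \<epsilon> \<eta> P \<and>
            real (card P) \<le> 2 powr (poly2 ?c 5 (1/\<epsilon>) (1/\<eta>)))"
  proof (intro allI impI)
    fix \<epsilon> \<eta> :: real and V :: "nat set" and F :: "nat set set"
    assume A: "0 < \<epsilon> \<and> \<epsilon> \<le> 1 \<and> 0 < \<eta> \<and> \<eta> \<le> 1 \<and> finite V \<and> F \<subseteq> Pow V \<and> F \<noteq> {}"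
    show "\<exists>P. is_clustering V F \<epsilon> \<eta> P \<and> real (card P) \<le> 2 powr (poly2 ?c 5 (1/\<epsilon>) (1/\<eta>))"
      unfolding poly2_eval by (rule cluster_bound) (use A in auto)
  qed
  show ?thesis by (rule exI[of _ ?c], rule exI[of _ 5], rule H)
qed

end
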